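(* Let $l_0\ge4$ be even and $G\in\operatorname{1\text{-}d\text{-}Ring}_{l_0}$. Then along the cycle $\operatorname U(G)$ the vertices alternate between black and white.
   Context: For a finite vertex set $V$ and $N\ge1$, a route through $V$ of length $N$ is a sequence $\mathbf i=(i_1,\dots,i_N)\in V^N$ whose set of entries equals $V$; its circuit multigraph $G_{\mathbf i}$ has vertex set $V$ and edges $1,\dots,N$, edge $k<N$ from $i_k$ to $i_{k+1}$, edge $N$ from $i_N$ to $i_1$; $\mathcal C_{V,N}$ is the set of these. The black vertices are $B(G_{\mathbf i})=\{i_t:t\text{ odd}\}$, the others white. $\operatorname U(G)$ is the simple undirected graph on $V$ having an edge $\{v,w\}$ whenever $G$ has an edge from $v$ to $w$ or from $w$ to $v$ (an undirected connection). A directed multigraph is balanced if its edges split into pairs $(e,e')$ with the head of $e$ the tail of $e'$ and vice versa. For $l_0\ge3$, $G\in\mathcal C_{V,2l_0}$ with $\#V=l_0$ is of ring-type if $\operatorname U(G)$ is a cycle through all $l_0$ vertices and each undirected connection consists of exactly two edges of $G$; $\operatorname{1\text{-}d\text{-}Ring}_{l_0}$ is the set of ring-type graphs with $l_0$ vertices that are not balanced. *)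

theory Defs
  imports Main
begin

(* A route i = (i_1,...,i_N) is represented as a list xs of length N, 0-indexed:
   i_{t} = xs ! (t-1).  The circuit multigraph G_i has edges k = 0..N-1 (paper: k+1),
   edge k going from xs!k (tail) to xs!((k+1) mod N) (head).  G_i is determined by
   (and determines) the route, so we identify G with (V, xs). *)

definition edge_tail :: "'a list \<Rightarrow> nat \<Rightarrow> 'a" where
  "edge_tail xs k = xs ! k"

definition edge_head :: "'a list \<Rightarrow> nat \<Rightarrow> 'a" where
  "edge_head xs k = xs ! ((k + 1) mod length xs)"

definition is_route :: "'a set \<Rightarrow> nat \<Rightarrow> 'a list \<Rightarrow> bool" where
  "is_route V N xs \<longleftrightarrow> N \<ge> 1 \<and> length xs = N \<and> set xs = V"

(* black vertices: i_t with t odd (1-indexed) = xs!t with t even (0-indexed) *)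
definition black :: "'a list \<Rightarrow> 'a set" where
  "black xs = {xs ! t | t. t < length xs \<and> even t}"

(* edge set of the simple undirected graph U(G) (loops are not edges of a simple graph) *)
definition U_edges :: "'a list \<Rightarrow> 'a set set" where
  "U_edges xs = {{edge_tail xs k, edge_head xs k} | k.
                   k < length xs \<and> edge_tail xs k \<noteq> edge_head xs k}"

definition cycle_through :: "'a set \<Rightarrow> 'a set set \<Rightarrow> 'a list \<Rightarrow> bool" where
  "cycle_through V E c \<longleftrightarrow> distinct c \<and> set c = V \<and> length c \<ge> 3 \<and>
     E = {{c ! j, c ! ((j + 1) mod length c)} | j. j < length c}"

definition conn_edges :: "'a list \<Rightarrow> 'a set \<Rightarrow> nat set" where
  "conn_edges xs e = {k. k < length xs \<and> {edge_tail xs k, edge_head xs k} = e}"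

definition balanced :: "'a list \<Rightarrow> bool" where
  "balanced xs \<longleftrightarrow> (\<exists>p. \<forall>k < length xs. p k < length xs \<and> p k \<noteq> k \<and> p (p k) = k \<and>
       edge_tail xs (p k) = edge_head xs k \<and> edge_head xs (p k) = edge_tail xs k)"

definition ring_type :: "nat \<Rightarrow> 'a set \<Rightarrow> 'a list \<Rightarrow> bool" where
  "ring_type l0 V xs \<longleftrightarrow> l0 \<ge> 3 \<and> finite V \<and> card V = l0 \<and> is_route V (2 * l0) xs \<and>
     (\<exists>c. cycle_through V (U_edges xs) c) \<and>
     (\<forall>e \<in> U_edges xs. card (conn_edges xs e) = 2)"

definition one_d_ring :: "nat \<Rightarrow> ('a set \<times> 'a list) set" where
  "one_d_ring l0 = {(V, xs). ring_type l0 V xs \<and> \<not> balanced xs}"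

end

theory Submission imports Defs begin

lemma mod_succ: "j < (n::nat) \<Longrightarrow> (j+1) mod n = (if j+1 = n then 0 else j+1)"
  by auto

lemma even_mod_even: "even (n::nat) \<Longrightarrow> even (x mod n) \<longleftrightarrow> even x"
  using dvd_mod_iff by blast

lemma pair_inj:
  assumes "distinct c" "length c \<ge> 3" "i < length c" "j < length c"
    "{c!i, c!((i+1) mod length c)} = {c!j, c!((j+1) mod length c)}"
  shows "i = j"
proof -
  let ?n = "length c"
  have n0: "0 < ?n" using assms by auto
  have i1: "(i+1) mod ?n < ?n" "(j+1) mod ?n < ?n" using n0 by auto
  from assms(5) have "(c!i = c!j \<and> c!((i+1) mod ?n) = c!((j+1) mod ?n)) \<or>
     (c!i = c!((j+1) mod ?n) \<and> c!((i+1) mod ?n) = c!j)"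
    by (simp add: doubleton_eq_iff)
  then show ?thesis
  proof
    assume "c!i = c!j \<and> c!((i+1) mod ?n) = c!((j+1) mod ?n)"
    then show ?thesis using assms nth_eq_iff_index_eq by blast
  next
    assume h: "c!i = c!((j+1) mod ?n) \<and> c!((i+1) mod ?n) = c!j"
    have "i = (j+1) mod ?n" using h assms i1 nth_eq_iff_index_eq by blast
    moreover have "j = (i+1) mod ?n" using h assms i1 nth_eq_iff_index_eq by blast
    ultimately show ?thesis
    proof (cases "j+1 = ?n")
      case True
      with \<open>i = (j+1) mod ?n\<close> have "i = 0" by simp
      with \<open>j = (i+1) mod ?n\<close> assms(2) have "j = 1" by simp
      with True assms(2) show ?thesis by simp
    next
      case False
      with \<open>i = (j+1) mod ?n\<close> assms(4) have "i = j+1" by simp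
      with \<open>j = (i+1) mod ?n\<close> have "j = (j+2) mod ?n" by simp
      moreover have "j + 2 \<le> ?n" using \<open>i = j+1\<close> assms(3) by simp
      ultimately show ?thesis using assms(2)
        by (cases "j+2 = ?n") auto
    qed
  qed
qed

lemma succ_inj: "x < (N::nat) \<Longrightarrow> y < N \<Longrightarrow> (x+1) mod N = (y+1) mod N \<Longrightarrow> x = y"
  by (metis Suc_eq_plus1 Suc_lessI add_diff_cancel_right' mod_self mod_less nat.simps(3) mod_succ)
lemma shift_card:
  fixes N :: nat
  shows "card {k. k < N \<and> P ((k+1) mod N)} = card {k. k < N \<and> P k}"
proof (cases "N = 0")
  case True then show ?thesis by simp
next
  case False
  let ?A = "{k. k < N \<and> P ((k+1) mod N)}"
  let ?f = "\<lambda>k. (k+1) mod N"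
  have injA: "inj_on ?f ?A" by (rule inj_onI) (use succ_inj in blast)
  have img: "?f ` ?A = {k. k < N \<and> P k}"
  proof
    show "?f ` ?A \<subseteq> {k. k < N \<and> P k}" using False by auto
    show "{k. k < N \<and> P k} \<subseteq> ?f ` ?A"
    proof
      fix k assume k: "k \<in> {k. k < N \<and> P k}"
      define k' where "k' = (if k = 0 then N - 1 else k - 1)"
      have "(k'+1) mod N = k" using k False unfolding k'_def by auto
      moreover have "k' < N" using False k unfolding k'_def by auto
      ultimately show "k \<in> ?f ` ?A" using k by (metis (mono_tags, lifting) imageI mem_Collect_eq)
    qed
  qed
  show ?thesis using card_image[OF injA] img by simp
qed
lemma walk_formula:
  assumes "n > 0" "length xs = N" "p0 < n"
    "\<forall>k<N. \<forall>i<n. xs!k = c!i \<longrightarrow> xs!((k+1) mod N) = c!((i+a) mod n)"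
    "xs!0 = c!p0"
  shows "k < N \<Longrightarrow> xs!k = c!((p0 + a*k) mod n)"
proof (induction k)
  case 0 then show ?case using assms by simp
next
  case (Suc k)
  then have "k < N" by simp
  have "xs!k = c!((p0 + a*k) mod n)" using Suc by simp
  moreover have "(p0 + a*k) mod n < n" using assms(1) by simp
  ultimately have "xs!((k+1) mod N) = c!(((p0 + a*k) mod n + a) mod n)"
    using \<open>k < N\<close> assms(4) by blast
  then have "xs!(Suc k) = c!(((p0 + a*k) mod n + a) mod n)" using Suc.prems by simp
  moreover have "((p0 + a*k) mod n + a) mod n = (p0 + a * Suc k) mod n"
    by (simp only: mod_add_left_eq) (simp add: algebra_simps)
  ultimately show ?case by simp
qed

lemma pred_mod:
  assumes "j < (n::nat)" "p < n" "(j+1) mod n = p"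
  shows "j = (p + n - 1) mod n"
proof (cases "j+1 = n")
  case True
  then have "p = 0" using assms by simp
  then show ?thesis using True by simp
next
  case False
  then have "p = j+1" using assms by simp
  then show ?thesis using assms by simp
qed

lemma succ_pred_mod:
  assumes "p < (n::nat)"
  shows "((p + n - 1) mod n + 1) mod n = p"
proof (cases "p = 0")
  case True
  then show ?thesis using assms by (cases n) auto
next
  case False
  then have "(p + n - 1) mod n = p - 1"
    using assms by (metis Nat.add_diff_assoc2 One_nat_def Suc_leI add.commute mod_add_self2 mod_less neq0_conv diff_less le_less_trans less_imp_diff_less zero_less_one)
  then show ?thesis using False assms by simp
qed

theorem lemma4p7:
  fixes l0 :: nat and V :: "'a set" and xs :: "'a list" and c :: "'a list"
  assumes "even l0" and "l0 \<ge> 4"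
    and "(V, xs) \<in> one_d_ring l0"
    and "cycle_through V (U_edges xs) c"
  shows "\<forall>j < length c. (c ! j \<in> black xs \<longleftrightarrow> c ! ((j + 1) mod length c) \<notin> black xs)"
proof -
  define n where "n = length c"
  define N where "N = length xs"
  have rt: "ring_type l0 V xs" and nb: "\<not> balanced xs" using assms(3) by (auto simp: one_d_ring_def)
  have cyc: "distinct c" "set c = V" "length c \<ge> 3"
    and UE: "U_edges xs = {{c ! j, c ! ((j + 1) mod length c)} | j. j < length c}"
    using assms(4) by (auto simp: cycle_through_def)
  have "card V = l0" "set xs = V" "length xs = 2 * l0" and conn2: "\<forall>e \<in> U_edges xs. card (conn_edges xs e) = 2"
    using rt by (auto simp: ring_type_def is_route_def)
  have nl0: "n = l0" using distinct_card[OF cyc(1)] cyc(2) \<open>card V = l0\<close> n_def by simp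
  have Nn: "N = 2 * n" using \<open>length xs = 2 * l0\<close> nl0 N_def by simp
  have n4: "n \<ge> 4" "even n" using assms(1,2) nl0 by auto
  have setxs: "set xs = set c" using cyc(2) \<open>set xs = V\<close> by simp
  define s where "s j = (j+1) mod n" for j
  define F where "F j = {k. k < N \<and> xs!k = c!j \<and> xs!((k+1) mod N) = c!(s j)}" for j
  define B where "B j = {k. k < N \<and> xs!k = c!(s j) \<and> xs!((k+1) mod N) = c!j}" for j
  have slt: "s j < n" for j using n4 by (simp add: s_def)
  have sne: "s j \<noteq> j" if "j < n" for j unfolding s_def using mod_succ[OF that] n4 by (auto split: if_splits)
  have cne: "c!j \<noteq> c!(s j)" if "j < n" for j
    using sne[OF that] that slt cyc(1) nth_eq_iff_index_eq n_def by metis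
  have cinj: "c!i = c!j \<Longrightarrow> i < n \<Longrightarrow> j < n \<Longrightarrow> i = j" for i j
    using cyc(1) nth_eq_iff_index_eq n_def by metis
  have pinj: "{c!i, c!(s i)} = {c!j, c!(s j)} \<Longrightarrow> i < n \<Longrightarrow> j < n \<Longrightarrow> i = j" for i j
    using pair_inj[OF cyc(1,3)] n_def s_def by metis
  have finF: "finite (F j)" "finite (B j)" for j by (auto simp: F_def B_def)
  have conn: "conn_edges xs {c!j, c!(s j)} = F j \<union> B j" for j
    by (auto simp: conn_edges_def edge_tail_def edge_head_def F_def B_def doubleton_eq_iff N_def)
  have FB2: "card (F j \<union> B j) = 2" if "j < n" for j
  proof -
    have "{c!j, c!(s j)} \<in> U_edges xs" using UE that n_def s_def by auto
    then show ?thesis using conn2 conn by metis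
  qed
  have FBdisj: "F j \<inter> B j = {}" if "j < n" for j
    using cne[OF that] cinj that slt by (auto simp: F_def B_def)
  have FBsum: "card (F j) + card (B j) = 2" if "j < n" for j
    using FB2[OF that] card_Un_disjoint[OF finF FBdisj[OF that]] by simp
  have Cdisj: "(F i \<union> B i) \<inter> (F j \<union> B j) = {}" if "i < n" "j < n" "i \<noteq> j" for i j
  proof (rule ccontr)
    assume "(F i \<union> B i) \<inter> (F j \<union> B j) \<noteq> {}"
    then obtain k where "k \<in> F i \<union> B i" "k \<in> F j \<union> B j" by blast
    then have "{xs!k, xs!((k+1) mod N)} = {c!i, c!(s i)}" "{xs!k, xs!((k+1) mod N)} = {c!j, c!(s j)}"
      by (auto simp: F_def B_def)
    then show False using pinj that by metis
  qed
  have cover: "(\<Union>j<n. F j \<union> B j) = {..<N}"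
  proof (rule card_subset_eq)
    show "finite {..<N}" by simp
    show "(\<Union>j<n. F j \<union> B j) \<subseteq> {..<N}" by (auto simp: F_def B_def)
    have "card (\<Union>j<n. F j \<union> B j) = (\<Sum>j<n. card (F j \<union> B j))"
      by (rule card_UN_disjoint) (use finF Cdisj in auto)
    also have "\<dots> = (\<Sum>j<n. 2)" using FB2 by simp
    finally show "card (\<Union>j<n. F j \<union> B j) = card {..<N}" using Nn by simp
  qed
  have cov: "\<exists>j<n. k \<in> F j \<or> k \<in> B j" if "k < N" for k
    using cover that by blast
  define pr where "pr p = (p + n - 1) mod n" for p
  have prlt: "pr p < n" for p using n4 by (simp add: pr_def)
  have spr: "s (pr p) = p" if "p < n" for p using succ_pred_mod[OF that] by (simp add: s_def pr_def)
  have prs: "s j = p \<Longrightarrow> j < n \<Longrightarrow> p < n \<Longrightarrow> j = pr p" for j p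
    using pred_mod by (simp add: s_def pr_def)
  have prne: "pr p \<noteq> s p" if "p < n" for p
  proof
    assume h: "pr p = s p"
    have "{c!p, c!(s p)} = {c!(pr p), c!(s (pr p))}" using h spr[OF that] by auto
    then have "p = pr p" using pinj that prlt by metis
    then show False using h sne that by metis
  qed
  have out_eq: "{k. k < N \<and> xs!k = c!p} = F p \<union> B (pr p)" if "p < n" for p
  proof
    show "{k. k < N \<and> xs!k = c!p} \<subseteq> F p \<union> B (pr p)"
    proof
      fix k assume "k \<in> {k. k < N \<and> xs!k = c!p}"
      then have k: "k < N" "xs!k = c!p" by auto
      then obtain j where j: "j < n" "k \<in> F j \<or> k \<in> B j" using cov by blast
      show "k \<in> F p \<union> B (pr p)"
      proof (cases "k \<in> F j")
        case True
        then have "c!j = c!p" using k by (simp add: F_def)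
        then have "j = p" using cinj j that by simp
        then show ?thesis using True by simp
      next
        case False
        then have "k \<in> B j" using j by simp
        then have "c!(s j) = c!p" using k by (simp add: B_def)
        then have "s j = p" using cinj slt that by simp
        then have "j = pr p" using prs j(1) that by blast
        then show ?thesis using \<open>k \<in> B j\<close> by simp
      qed
    qed
    show "F p \<union> B (pr p) \<subseteq> {k. k < N \<and> xs!k = c!p}"
      using spr[OF that] by (auto simp: F_def B_def)
  qed
  have in_eq: "{k. k < N \<and> xs!((k+1) mod N) = c!p} = F (pr p) \<union> B p" if "p < n" for p
  proof
    show "{k. k < N \<and> xs!((k+1) mod N) = c!p} \<subseteq> F (pr p) \<union> B p"
    proof
      fix k assume "k \<in> {k. k < N \<and> xs!((k+1) mod N) = c!p}"
      then have k: "k < N" "xs!((k+1) mod N) = c!p" by auto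
      then obtain j where j: "j < n" "k \<in> F j \<or> k \<in> B j" using cov by blast
      show "k \<in> F (pr p) \<union> B p"
      proof (cases "k \<in> F j")
        case True
        then have "c!(s j) = c!p" using k by (simp add: F_def)
        then have "s j = p" using cinj slt that by simp
        then have "j = pr p" using prs j(1) that by blast
        then show ?thesis using True by simp
      next
        case False
        then have "k \<in> B j" using j by simp
        then have "c!j = c!p" using k by (simp add: B_def)
        then have "j = p" using cinj j that by simp
        then show ?thesis using \<open>k \<in> B j\<close> by simp
      qed
    qed
    show "F (pr p) \<union> B p \<subseteq> {k. k < N \<and> xs!((k+1) mod N) = c!p}"
      using spr[OF that] by (auto simp: F_def B_def)
  qed
  have disj1: "F p \<inter> B (pr p) = {}" if "p < n" for p
  proof (rule ccontr)
    assume "F p \<inter> B (pr p) \<noteq> {}"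
    then obtain k where "k \<in> F p" "k \<in> B (pr p)" by blast
    then have "c!(s p) = c!(pr p)" by (simp add: F_def B_def)
    then show False using cinj slt prlt prne that by metis
  qed
  have disj2: "F (pr p) \<inter> B p = {}" if "p < n" for p
  proof (rule ccontr)
    assume "F (pr p) \<inter> B p \<noteq> {}"
    then obtain k where "k \<in> F (pr p)" "k \<in> B p" by blast
    then have "c!(s p) = c!(pr p)" by (simp add: F_def B_def)
    then show False using cinj slt prlt prne that by metis
  qed
  have inout: "card {k. k < N \<and> xs!((k+1) mod N) = v} = card {k. k < N \<and> xs!k = v}" for v
    using shift_card[of N "\<lambda>i. xs!i = v"] by simp
  have fstep: "card (F p) = card (F (pr p))" if "p < n" for p
  proof -
    have "card (F p) + card (B (pr p)) = card (F p \<union> B (pr p))"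
      using card_Un_disjoint[OF finF(1) finF(2) disj1[OF that]] by simp
    also have "\<dots> = card (F (pr p) \<union> B p)"
      using inout[of "c!p"] out_eq[OF that] in_eq[OF that] by simp
    also have "\<dots> = card (F (pr p)) + card (B p)"
      using card_Un_disjoint[OF finF(1) finF(2) disj2[OF that]] by simp
    finally have "card (F p) + card (B (pr p)) = card (F (pr p)) + card (B p)" .
    then show ?thesis using FBsum[OF that] FBsum[OF prlt[of p]] by simp
  qed
  have fconst: "j < n \<Longrightarrow> card (F j) = card (F 0)" for j
  proof (induction j)
    case 0 then show ?case by simp
  next
    case (Suc j)
    have "pr (Suc j) = j" using Suc.prems by (simp add: pr_def)
    then show ?case using fstep[OF Suc.prems] Suc by simp
  qed
  have "card (F 0) \<le> 2" using FBsum[of 0] n4 by simp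
  then have "card (F 0) = 1 \<or> card (F 0) = 2 \<or> card (F 0) = 0" by auto
  have N0: "N > 0" using Nn n4 by simp
  have noloop: "xs!k \<noteq> xs!((k+1) mod N)" if kN: "k < N" for k
  proof -
    obtain j where j: "j < n" "k \<in> F j \<or> k \<in> B j" using cov[OF kN] by blast
    then show ?thesis using cne[OF j(1)] by (auto simp: F_def B_def)
  qed
  have bal: "balanced xs" if f1: "card (F 0) = 1"
  proof -
    have Fj1: "card (F j) = 1" "card (B j) = 1" if "j < n" for j
      using fconst[OF that] f1 FBsum[OF that] by auto
    define R where "R k = {k'. k' < N \<and> xs!k' = xs!((k+1) mod N) \<and> xs!((k'+1) mod N) = xs!k}" for k
    have R1: "card (R k) = 1" if kN: "k < N" for k
    proof -
      obtain j where j: "j < n" "k \<in> F j \<or> k \<in> B j" using cov[OF kN] by blast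
      show ?thesis
      proof (cases "k \<in> F j")
        case True
        then have "R k = B j" by (auto simp: R_def F_def B_def)
        then show ?thesis using Fj1[OF j(1)] by simp
      next
        case False
        then have "k \<in> B j" using j by simp
        then have "R k = F j" by (auto simp: R_def F_def B_def)
        then show ?thesis using Fj1[OF j(1)] by simp
      qed
    qed
    define P where "P k = the_elem (R k)" for k
    have PR: "R k = {P k}" if "k < N" for k
      using R1[OF that] unfolding P_def by (metis card_1_singletonE the_elem_eq)
    have PRm: "P k < N \<and> xs!(P k) = xs!((k+1) mod N) \<and> xs!((P k + 1) mod N) = xs!k" if "k < N" for k
      using PR[OF that] unfolding R_def by blast
    show ?thesis unfolding balanced_def edge_tail_def edge_head_def
    proof (intro exI allI impI)
      fix k assume "k < length xs"
      then have k: "k < N" by (simp add: N_def)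
      note pk = PRm[OF k]
      have "P k \<noteq> k" using pk noloop[OF k] by metis
      moreover have "k \<in> R (P k)" using pk k unfolding R_def by simp
      then have "P (P k) = k" using PR[of "P k"] pk by simp
      ultimately show "P k < length xs \<and> P k \<noteq> k \<and> P (P k) = k \<and>
        xs ! P k = xs ! ((k + 1) mod length xs) \<and> xs ! ((P k + 1) mod length xs) = xs ! k"
        using pk by (simp add: N_def)
    qed
  qed
  have "\<exists>a. odd a \<and> (\<forall>k<N. \<forall>i<n. xs!k = c!i \<longrightarrow> xs!((k+1) mod N) = c!((i+a) mod n))"
  proof (cases "card (F 0) = 2")
    case True
    have Be: "B j = {}" if "j < n" for j
      using fconst[OF that] True FBsum[OF that] finF(2)[of j] by auto
    have "\<forall>k<N. \<forall>i<n. xs!k = c!i \<longrightarrow> xs!((k+1) mod N) = c!((i+1) mod n)"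
    proof (intro allI impI)
      fix k i assume k: "k < N" and i: "i < n" and e: "xs!k = c!i"
      obtain j where j: "j < n" "k \<in> F j" using cov[OF k] Be by blast
      then have "c!j = c!i" using e by (simp add: F_def)
      then have "j = i" using cinj j(1) i by blast
      then show "xs!((k+1) mod N) = c!((i+1) mod n)" using j by (simp add: F_def s_def)
    qed
    then show ?thesis by (intro exI[of _ 1]) simp
  next
    case False
    then have f0: "card (F 0) = 0" using \<open>card (F 0) = 1 \<or> card (F 0) = 2 \<or> card (F 0) = 0\<close> bal nb by auto
    have Fe: "F j = {}" if "j < n" for j
      using fconst[OF that] f0 finF(1)[of j] by auto
    have "\<forall>k<N. \<forall>i<n. xs!k = c!i \<longrightarrow> xs!((k+1) mod N) = c!((i+(n-1)) mod n)"
    proof (intro allI impI)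
      fix k i assume k: "k < N" and i: "i < n" and e: "xs!k = c!i"
      obtain j where j: "j < n" "k \<in> B j" using cov[OF k] Fe by blast
      then have "c!(s j) = c!i" using e by (simp add: B_def)
      then have "s j = i" using cinj slt i by blast
      then have "j = pr i" using prs j(1) i by blast
      moreover have "pr i = (i + (n-1)) mod n" using n4 by (simp add: pr_def)
      ultimately show "xs!((k+1) mod N) = c!((i+(n-1)) mod n)" using j by (simp add: B_def)
    qed
    moreover have "odd (n - 1)" using n4 by simp
    ultimately show ?thesis by blast
  qed
  then obtain a where a: "odd a" "\<forall>k<N. \<forall>i<n. xs!k = c!i \<longrightarrow> xs!((k+1) mod N) = c!((i+a) mod n)"
    by blast
  have "xs!0 \<in> set c" using setxs N0 N_def by (metis nth_mem)
  then obtain p0 where p0: "p0 < n" "xs!0 = c!p0" using in_set_conv_nth n_def by metis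
  have wf: "xs!t = c!((p0 + a*t) mod n)" if "t < N" for t
    using walk_formula[of n xs N p0 c a t] n4 N_def p0 a(2) that by simp
  have par: "even i \<longleftrightarrow> even (p0 + t)" if "t < N" "i < n" "xs!t = c!i" for t i
  proof -
    have "i = (p0 + a*t) mod n" using wf[OF that(1)] that(2,3) cinj n4 by simp
    then have "even i \<longleftrightarrow> even (p0 + a*t)" using even_mod_even[OF n4(2)] by simp
    then show ?thesis using a(1) by simp
  qed
  have blk: "c!i \<in> black xs \<longleftrightarrow> (even i \<longleftrightarrow> even p0)" if "i < n" for i
  proof
    assume "c!i \<in> black xs"
    then obtain t where t: "c!i = xs!t" "t < N" "even t" by (auto simp: black_def N_def)
    then show "even i \<longleftrightarrow> even p0" using par[OF t(2) that] by simp
  next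
    assume h: "even i \<longleftrightarrow> even p0"
    have "c!i \<in> set xs" using setxs that n_def by simp
    then obtain t where t: "t < N" "xs!t = c!i" using in_set_conv_nth N_def by metis
    then have "even t" using par[OF t(1) that t(2)] h by (cases "even p0") simp_all
    then show "c!i \<in> black xs" using t unfolding black_def N_def by (metis (mono_tags, lifting) mem_Collect_eq)
  qed
  show ?thesis
  proof (intro allI impI)
    fix j assume "j < length c"
    then have j: "j < n" by (simp add: n_def)
    have "even (s j) \<longleftrightarrow> \<not> even j"
    proof (cases "j + 1 = n")
      case True
      then have "s j = 0" by (simp add: s_def)
      moreover have "odd j" using True n4 by presburger
      ultimately show ?thesis by simp
    next
      case False
      then have "s j = j + 1" using j by (simp add: s_def)
      then show ?thesis by simp
    qed
    then show "c ! j \<in> black xs \<longleftrightarrow> c ! ((j + 1) mod length c) \<notin> black xs"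
      using blk[OF j] blk[OF slt[of j]] by (simp add: s_def n_def)
  qed
qed

end
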